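(* Let $f_{SA}(x)=\sqrt{\frac{x^2+1}{2}}-\frac{x+1}{2}$ for $x\in(0,\infty)$, let $f_{SA}^*(u)=u\,f_{SA}\!\left(\frac{1-u}{u}\right)$ for $u\in(0,1)$, extended by continuity to $[0,1]$ (explicitly $f_{SA}^*(u)=\frac12\left[\sqrt{2(u^2+(1-u)^2)}-1\right]$), and define $\overline M_{SA}(C_1,C_2)=E_X\{f_{SA}^*(P(C_2\mid x))\}$. Then $$P_e\le \frac12\left[1-\frac{2}{\sqrt2-1}\,\overline M_{SA}(C_1,C_2)\right].$$
   Context: Two-class decision problem: classes (hypotheses) $C_1,C_2$, an observation $x$ in a space $\mathrm X$ with density $p(x)$, and a posteriori probabilities $P(C_1\mid x),P(C_2\mid x)\ge0$ with $P(C_1\mid x)+P(C_2\mid x)=1$. $E_X\{g(x)\}=\int_{\mathrm X} g(x)p(x)\,dx$. $P_e=E_X\{\min(P(C_1\mid x),P(C_2\mid x))\}$ is the Bayesian probability of error. Equivalently $E_X\{f^*(P(C_2\mid x))\}=E_X\{f(P(C_1\mid x)/P(C_2\mid x))\,P(C_2\mid x)\}$. *)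

theory Defs
  imports "HOL-Analysis.Analysis"
begin

definition f_SA :: "real \<Rightarrow> real" where
  "f_SA x = sqrt ((x\<^sup>2 + 1) / 2) - (x + 1) / 2"

text \<open>f_SA^*(u) = u f_SA((1-u)/u) on (0,1), extended by continuity to [0,1]
  (the limits at u = 0 and u = 1 are both (sqrt 2 - 1)/2).\<close>
definition f_SA_star :: "real \<Rightarrow> real" where
  "f_SA_star u = (if 0 < u \<and> u < 1 then u * f_SA ((1 - u) / u)
                  else (1/2) * (sqrt 2 - 1))"

definition E_X :: "'a measure \<Rightarrow> ('a \<Rightarrow> real) \<Rightarrow> ('a \<Rightarrow> real) \<Rightarrow> real" where
  "E_X M p g = (\<integral>x. g x * p x \<partial>M)"

definition bayes_error :: "'a measure \<Rightarrow> ('a \<Rightarrow> real) \<Rightarrow> ('a \<Rightarrow> real) \<Rightarrow> ('a \<Rightarrow> real) \<Rightarrow> real" where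
  "bayes_error M p P1 P2 = E_X M p (\<lambda>x. min (P1 x) (P2 x))"

definition M_SA :: "'a measure \<Rightarrow> ('a \<Rightarrow> real) \<Rightarrow> ('a \<Rightarrow> real) \<Rightarrow> real" where
  "M_SA M p P2 = E_X M p (\<lambda>x. f_SA_star (P2 x))"

end

theory Submission
  imports Defs
begin

lemma fstar_eq:
  assumes "0 \<le> u" "u \<le> 1"
  shows "f_SA_star u = sqrt ((u\<^sup>2 + (1-u)\<^sup>2)/2) - 1/2"
proof (cases "0 < u \<and> u < 1")
  case True
  have "u * sqrt ((((1-u)/u)\<^sup>2 + 1)/2) = sqrt (u\<^sup>2 * ((((1-u)/u)\<^sup>2 + 1)/2))"
  proof -
    have "sqrt (u\<^sup>2 * ((((1-u)/u)\<^sup>2 + 1)/2)) = sqrt (u\<^sup>2) * sqrt ((((1-u)/u)\<^sup>2 + 1)/2)"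
      by (rule real_sqrt_mult)
    then show ?thesis using True by simp
  qed
  also have "u\<^sup>2 * ((((1-u)/u)\<^sup>2 + 1)/2) = (u\<^sup>2 + (1-u)\<^sup>2)/2"
    using True by (simp add: field_simps power2_eq_square)
  finally have a: "u * sqrt ((((1-u)/u)\<^sup>2 + 1)/2) = sqrt ((u\<^sup>2 + (1-u)\<^sup>2)/2)" .
  have b: "u * (((1-u)/u + 1)/2) = 1/2" using True by (simp add: field_simps)
  show ?thesis using True a b by (simp add: f_SA_star_def f_SA_def right_diff_distrib)
next
  case False
  then have "u = 0 \<or> u = 1" using assms by auto
  moreover have "2 / sqrt 2 = sqrt 2" by (rule real_div_sqrt) simp
  moreover have "sqrt (1/2) = sqrt 2 / 2"
    using \<open>2 / sqrt 2 = sqrt 2\<close> by (simp add: real_sqrt_divide field_simps)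
  ultimately show ?thesis using False by (auto simp: f_SA_star_def field_simps)
qed

lemma pointwise:
  assumes "0 \<le> u" "u \<le> 1"
  shows "min (1-u) u \<le> (1/2) * (1 - (2 / (sqrt 2 - 1)) * f_SA_star u)"
proof -
  define m where "m = min (1-u) u"
  have m: "0 \<le> m" "m \<le> 1/2" using assms by (auto simp: m_def min_def)
  have sq: "(u\<^sup>2 + (1-u)\<^sup>2) = (m\<^sup>2 + (1-m)\<^sup>2)"
    by (cases "u \<le> 1 - u") (auto simp: m_def min_def power2_eq_square algebra_simps)
  have s2: "sqrt 2 * sqrt 2 = 2" by simp
  have s2g: "sqrt 2 > 1" by simp
  have s2l: "sqrt 2 < 2" by (smt (verit) real_less_rsqrt real_sqrt_four real_sqrt_less_iff)
  have pos: "0 \<le> sqrt 2 / 2 - (sqrt 2 - 1) * m"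
  proof -
    have "(sqrt 2 - 1) * m \<le> (sqrt 2 - 1) * (1/2)" using m s2g by (intro mult_left_mono) auto
    moreover have "(sqrt 2 - 1) * (1/2) = sqrt 2/2 - 1/2" by simp
    ultimately show ?thesis by linarith
  qed
  have key: "(m\<^sup>2 + (1-m)\<^sup>2)/2 \<le> (sqrt 2 / 2 - (sqrt 2 - 1) * m)\<^sup>2"
  proof -
    have "(sqrt 2 / 2 - (sqrt 2 - 1) * m)\<^sup>2 - (m\<^sup>2 + (1-m)\<^sup>2)/2 = (sqrt 2 - 1) * m * (1 - 2*m)"
      by (simp add: power2_eq_square algebra_simps s2 field_simps)
    moreover have "0 \<le> (sqrt 2 - 1) * m * (1 - 2*m)" using m s2g by simp
    ultimately show ?thesis by linarith
  qed
  have S: "sqrt ((u\<^sup>2 + (1-u)\<^sup>2)/2) \<le> sqrt 2 / 2 - (sqrt 2 - 1) * m"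
    unfolding sq by (rule real_le_lsqrt[OF pos key])
  have c: "sqrt 2 - 1 > 0" using s2g by simp
  have "(1/2) * (1 - (2 / (sqrt 2 - 1)) * f_SA_star u)
      = (1/2) * (1 - (2 / (sqrt 2 - 1)) * (sqrt ((u\<^sup>2 + (1-u)\<^sup>2)/2) - 1/2))"
    using fstar_eq[OF assms] by simp
  also have "\<dots> \<ge> (1/2) * (1 - (2 / (sqrt 2 - 1)) * (sqrt 2 / 2 - (sqrt 2 - 1) * m - 1/2))"
    using S c by (intro mult_left_mono diff_left_mono mult_left_mono) (auto simp: divide_simps)
  moreover have "(1/2) * (1 - (2 / (sqrt 2 - 1)) * (sqrt 2 / 2 - (sqrt 2 - 1) * m - 1/2)) = m"
    using c by (simp add: field_simps)
  ultimately show ?thesis unfolding m_def by linarith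
qed

lemma fstar_meas: "f_SA_star \<in> borel_measurable borel"
  unfolding f_SA_star_def f_SA_def by measurable

lemma fstar_bound: "0 \<le> u \<Longrightarrow> u \<le> 1 \<Longrightarrow> \<bar>f_SA_star u\<bar> \<le> 1"
proof -
  assume a: "0 \<le> u" "u \<le> 1"
  have "u\<^sup>2 + (1-u)\<^sup>2 \<le> 2" using a by (smt (verit) power_le_one)
  then have "sqrt ((u\<^sup>2 + (1-u)\<^sup>2)/2) \<le> 1" by simp
  moreover have "sqrt ((u\<^sup>2 + (1-u)\<^sup>2)/2) \<ge> 0" by simp
  ultimately show ?thesis using fstar_eq[OF a] by linarith
qed

theorem mainTheorem1:
  fixes M :: "'a measure" and p P1 P2 :: "'a \<Rightarrow> real"
  assumes p_meas: "p \<in> borel_measurable M"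
    and p_nonneg: "\<And>x. x \<in> space M \<Longrightarrow> p x \<ge> 0"
    and p_int: "integrable M p"
    and p_total: "(\<integral>x. p x \<partial>M) = 1"
    and P1_meas: "P1 \<in> borel_measurable M"
    and P2_meas: "P2 \<in> borel_measurable M"
    and P1_nonneg: "\<And>x. x \<in> space M \<Longrightarrow> P1 x \<ge> 0"
    and P2_nonneg: "\<And>x. x \<in> space M \<Longrightarrow> P2 x \<ge> 0"
    and P_sum: "\<And>x. x \<in> space M \<Longrightarrow> P1 x + P2 x = 1"
  shows "bayes_error M p P1 P2 \<le> (1/2) * (1 - (2 / (sqrt 2 - 1)) * M_SA M p P2)"
proof -
  define c where "c = 2 / (sqrt 2 - 1)"
  have P2le: "\<And>x. x \<in> space M \<Longrightarrow> P2 x \<le> 1" using P_sum P1_nonneg by (smt (verit))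
  have fm: "(\<lambda>x. f_SA_star (P2 x)) \<in> borel_measurable M"
    using measurable_compose[OF P2_meas fstar_meas] by (simp add: o_def)
  have int1: "integrable M (\<lambda>x. min (P1 x) (P2 x) * p x)"
  proof (rule Bochner_Integration.integrable_bound[OF p_int])
    show "(\<lambda>x. min (P1 x) (P2 x) * p x) \<in> borel_measurable M" using P1_meas P2_meas p_meas by measurable
    show "AE x in M. norm (min (P1 x) (P2 x) * p x) \<le> norm (p x)"
    proof (rule AE_I2)
      fix x assume x: "x \<in> space M"
      have "\<bar>min (P1 x) (P2 x)\<bar> \<le> 1" using P1_nonneg[OF x] P2_nonneg[OF x] P2le[OF x] by auto
      then show "norm (min (P1 x) (P2 x) * p x) \<le> norm (p x)"
        using p_nonneg[OF x] by (simp add: abs_mult mult_left_le_one_le)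
    qed
  qed
  have int2: "integrable M (\<lambda>x. f_SA_star (P2 x) * p x)"
  proof (rule Bochner_Integration.integrable_bound[OF p_int])
    show "(\<lambda>x. f_SA_star (P2 x) * p x) \<in> borel_measurable M" using fm p_meas by measurable
    show "AE x in M. norm (f_SA_star (P2 x) * p x) \<le> norm (p x)"
    proof (rule AE_I2)
      fix x assume x: "x \<in> space M"
      have "\<bar>f_SA_star (P2 x)\<bar> \<le> 1" using fstar_bound P2_nonneg[OF x] P2le[OF x] by auto
      then show "norm (f_SA_star (P2 x) * p x) \<le> norm (p x)"
        using p_nonneg[OF x] by (simp add: abs_mult mult_left_le_one_le)
    qed
  qed
  have "bayes_error M p P1 P2 = (\<integral>x. min (P1 x) (P2 x) * p x \<partial>M)"
    by (simp add: bayes_error_def E_X_def)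
  also have "\<dots> \<le> (\<integral>x. (1/2) * p x - (c/2) * (f_SA_star (P2 x) * p x) \<partial>M)"
  proof (rule integral_mono)
    show "integrable M (\<lambda>x. (1/2) * p x - (c/2) * (f_SA_star (P2 x) * p x))"
      using p_int int2 by auto
    fix x assume x: "x \<in> space M"
    have "min (P1 x) (P2 x) = min (1 - P2 x) (P2 x)" using P_sum[OF x] by (smt (verit))
    also have "\<dots> \<le> (1/2) * (1 - c * f_SA_star (P2 x))"
      unfolding c_def using pointwise P2_nonneg[OF x] P2le[OF x] by blast
    finally have "min (P1 x) (P2 x) * p x \<le> (1/2) * (1 - c * f_SA_star (P2 x)) * p x"
      using p_nonneg[OF x] by (intro mult_right_mono) auto
    then show "min (P1 x) (P2 x) * p x \<le> (1/2) * p x - (c/2) * (f_SA_star (P2 x) * p x)"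
      by (simp add: algebra_simps)
  qed (rule int1)
  also have "\<dots> = (1/2) * (\<integral>x. p x \<partial>M) - (c/2) * (\<integral>x. f_SA_star (P2 x) * p x \<partial>M)"
    using p_int int2 by simp
  also have "\<dots> = (1/2) * (1 - c * M_SA M p P2)"
    using p_total by (simp add: M_SA_def E_X_def algebra_simps)
  finally show ?thesis unfolding c_def .
qed

end
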